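(* Let $Q=Q(p,t)$, $p\in[0,S]$, $t\in[0,T]$, satisfy $dQ(p,t)=\mu_Q(p,t)dt+\int_0^1\tilde\sigma_Q(p,s,t)B(ds,dt)$ with $\tilde\sigma_Q=\sigma_Qb_Q$, $\int_0^1b_Q^2(p,s,t)ds=1$, $Q$ strictly decreasing and $C^2$ in $p$, and $\tilde\sigma_Q$ $C^1$ in $p$. Assume the demand curve depends linearly on $p$ in the sense that $$\frac{\frac{\partial\tilde\sigma_Q}{\partial p}(p,s,t)}{\frac{\partial Q}{\partial p}(p,t)}=h_Q(s,t)\quad\text{and}\quad\frac{\partial^2Q}{\partial p^2}(p,t)=0$$ for a bounded function $h_Q$. If there exists a bounded function $\lambda_Q=\lambda_Q(s,t)$ such that, for every $t\in[0,T]$ (and $p\in[0,S]$), $\mu_Q(p,t)=\int_0^1\tilde\sigma_Q(p,s,t)\lambda_Q(s,t)\,ds$, then the market price of risk equation $$\int_0^1\tilde\sigma_Q(p,s,t)\lambda(s,t)\,ds=A(p,t),\qquad p\in[0,S],\ t\in[0,T],$$ has the bounded solution $\lambda(s,t)=\lambda_Q(s,t)-h_Q(s,t)$.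
   Context: $B$ is a Brownian sheet on $[0,1]\times[0,T]$ on a filtered probability space generating the filtration; $\int_0^1 b(s,t)B(ds,dt)$ denotes the (differential of the) stochastic integral against it. $\mu_Q,\sigma_Q,b_Q$ are adapted real-valued processes. Notation: $C(p,t)=-\big(\frac{\partial Q}{\partial p}(p,t)\big)^{-1}\int_0^1\frac{\partial\tilde\sigma_Q}{\partial p}(p,s,t)\tilde\sigma_Q(p,s,t)ds$ and $A(p,t)=\mu_Q(p,t)+\frac12\frac{\partial^2Q}{\partial p^2}(p,t)\Big(\frac{\sigma_Q(p,t)}{\frac{\partial Q}{\partial p}(p,t)}\Big)^2+C(p,t)$. *)

theory Defs
  imports "HOL-Analysis.Analysis"
begin

text \<open>Conventions: sig p s t stands for tilde-sigma_Q(p,s,t); Qp, Qpp are the first and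
second p-derivatives of Q; sigp p s t is the p-derivative of tilde-sigma_Q.\<close>

definition C_fn ::
  "(real \<Rightarrow> real \<Rightarrow> real) \<Rightarrow> (real \<Rightarrow> real \<Rightarrow> real \<Rightarrow> real) \<Rightarrow>
   (real \<Rightarrow> real \<Rightarrow> real \<Rightarrow> real) \<Rightarrow> real \<Rightarrow> real \<Rightarrow> real" where
  "C_fn Qp sig sigp p t =
     - inverse (Qp p t) * (LINT s:{0..1}|lborel. sigp p s t * sig p s t)"

definition A_fn ::
  "(real \<Rightarrow> real \<Rightarrow> real) \<Rightarrow> (real \<Rightarrow> real \<Rightarrow> real) \<Rightarrow> (real \<Rightarrow> real \<Rightarrow> real) \<Rightarrow>
   (real \<Rightarrow> real \<Rightarrow> real) \<Rightarrow> (real \<Rightarrow> real \<Rightarrow> real \<Rightarrow> real) \<Rightarrow>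
   (real \<Rightarrow> real \<Rightarrow> real \<Rightarrow> real) \<Rightarrow> real \<Rightarrow> real \<Rightarrow> real" where
  "A_fn mu Qp Qpp sigQ sig sigp p t =
     mu p t + 1/2 * Qpp p t * (sigQ p t / Qp p t)^2 + C_fn Qp sig sigp p t"

end

theory Submission
  imports Defs
begin

lemma int_aux:
  fixes b g :: "real \<Rightarrow> real"
  assumes bm: "b \<in> borel_measurable lborel" and b2: "(LINT s:{0..1}|lborel. (b s)^2) = 1"
    and gm: "g \<in> borel_measurable lborel" and gb: "\<forall>s\<in>{0..1}. \<bar>g s\<bar> \<le> M"
  shows "set_integrable lborel {0..1} (\<lambda>s. b s * g s)"
proof -
  have i2: "set_integrable lborel {0..1} (\<lambda>s. (b s)^2)"
  proof (rule ccontr)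
    assume "\<not> ?thesis"
    then have "(LINT s:{0..1}|lborel. (b s)^2) = 0"
      unfolding set_integrable_def set_lebesgue_integral_def
      by (simp add: not_integrable_integral_eq)
    with b2 show False by simp
  qed
  have i1: "set_integrable lborel {0..(1::real)} (\<lambda>s. 1::real)"
    by (rule borel_integrable_atLeastAtMost') (simp add: continuous_on_const)
  have i3: "set_integrable lborel {0..1} (\<lambda>s. \<bar>M\<bar> * (1 + (b s)^2))"
    using set_integral_add(1)[OF i1 i2] by (intro set_integrable_mult_right) auto
  show ?thesis
  proof (rule set_integrable_bound[OF i3])
    show "set_borel_measurable lborel {0..1} (\<lambda>s. b s * g s)"
      unfolding set_borel_measurable_def using bm gm by measurable
    show "AE x in lborel. x \<in> {0..1} \<longrightarrow> norm (b x * g x) \<le> norm (\<bar>M\<bar> * (1 + (b x)^2))"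
    proof (rule AE_I2, intro impI)
      fix x assume x: "x \<in> {0..(1::real)}"
      have "\<bar>b x\<bar> \<le> 1 + (b x)^2"
      proof -
        have "0 \<le> (\<bar>b x\<bar> - 1)^2" by simp
        then have "0 \<le> \<bar>b x\<bar>^2 - 2 * \<bar>b x\<bar> + 1" by (simp add: power2_diff)
        then show ?thesis by simp
      qed
      moreover have "\<bar>g x\<bar> \<le> \<bar>M\<bar>" using gb x by force
      ultimately have "\<bar>b x\<bar> * \<bar>g x\<bar> \<le> (1 + (b x)^2) * \<bar>M\<bar>"
        by (intro mult_mono) auto
      then show "norm (b x * g x) \<le> norm (\<bar>M\<bar> * (1 + (b x)^2))"
        by (simp add: abs_mult mult.commute)
    qed
  qed
qed

theorem proposition5p6:
  fixes Q mu sigQ Qp Qpp hQ lamQ :: "real \<Rightarrow> real \<Rightarrow> real"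
    and bQ sig sigp :: "real \<Rightarrow> real \<Rightarrow> real \<Rightarrow> real"
    and S T :: real
  assumes sig_eq: "\<forall>p s t. sig p s t = sigQ p t * bQ p s t"
    and b_norm: "\<forall>p\<in>{0..S}. \<forall>t\<in>{0..T}. (LINT s:{0..1}|lborel. (bQ p s t)^2) = 1"
    and b_meas: "\<forall>p\<in>{0..S}. \<forall>t\<in>{0..T}. (\<lambda>s. bQ p s t) \<in> borel_measurable lborel"
    and Q_decr: "\<forall>t\<in>{0..T}. \<forall>p1\<in>{0..S}. \<forall>p2\<in>{0..S}. p1 < p2 \<longrightarrow> Q p2 t < Q p1 t"
    and Q_d1: "\<forall>t\<in>{0..T}. \<forall>p\<in>{0..S}.
                 ((\<lambda>q. Q q t) has_real_derivative Qp p t) (at p within {0..S})"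
    and Q_d2: "\<forall>t\<in>{0..T}. \<forall>p\<in>{0..S}.
                 ((\<lambda>q. Qp q t) has_real_derivative Qpp p t) (at p within {0..S})"
    and Qpp_cont: "\<forall>t\<in>{0..T}. continuous_on {0..S} (\<lambda>p. Qpp p t)"
    and sig_d: "\<forall>t\<in>{0..T}. \<forall>s\<in>{0..1}. \<forall>p\<in>{0..S}.
                 ((\<lambda>q. sig q s t) has_real_derivative sigp p s t) (at p within {0..S})"
    and sigp_cont: "\<forall>t\<in>{0..T}. \<forall>s\<in>{0..1}. continuous_on {0..S} (\<lambda>p. sigp p s t)"
    and lin1: "\<forall>t\<in>{0..T}. \<forall>s\<in>{0..1}. \<forall>p\<in>{0..S}. sigp p s t / Qp p t = hQ s t"
    and lin2: "\<forall>t\<in>{0..T}. \<forall>p\<in>{0..S}. Qpp p t = 0"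
    and h_bdd: "\<exists>M. \<forall>s\<in>{0..1}. \<forall>t\<in>{0..T}. \<bar>hQ s t\<bar> \<le> M"
    and h_meas: "\<forall>t\<in>{0..T}. (\<lambda>s. hQ s t) \<in> borel_measurable lborel"
    and lam_bdd: "\<exists>M. \<forall>s\<in>{0..1}. \<forall>t\<in>{0..T}. \<bar>lamQ s t\<bar> \<le> M"
    and lam_meas: "\<forall>t\<in>{0..T}. (\<lambda>s. lamQ s t) \<in> borel_measurable lborel"
    and mu_eq: "\<forall>t\<in>{0..T}. \<forall>p\<in>{0..S}.
                 mu p t = (LINT s:{0..1}|lborel. sig p s t * lamQ s t)"
  shows "(\<exists>M. \<forall>s\<in>{0..1}. \<forall>t\<in>{0..T}. \<bar>lamQ s t - hQ s t\<bar> \<le> M) \<and>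
         (\<forall>p\<in>{0..S}. \<forall>t\<in>{0..T}.
            (LINT s:{0..1}|lborel. sig p s t * (lamQ s t - hQ s t))
              = A_fn mu Qp Qpp sigQ sig sigp p t)"
proof -
  obtain Mh where Mh: "\<forall>s\<in>{0..1}. \<forall>t\<in>{0..T}. \<bar>hQ s t\<bar> \<le> Mh" using h_bdd by blast
  obtain Ml where Ml: "\<forall>s\<in>{0..1}. \<forall>t\<in>{0..T}. \<bar>lamQ s t\<bar> \<le> Ml" using lam_bdd by blast
  have P1: "\<forall>s\<in>{0..1}. \<forall>t\<in>{0..T}. \<bar>lamQ s t - hQ s t\<bar> \<le> Ml + Mh"
  proof (intro ballI)
    fix s t assume "s \<in> {0..1::real}" "t \<in> {0..T}"
    then have "\<bar>lamQ s t\<bar> \<le> Ml" "\<bar>hQ s t\<bar> \<le> Mh" using Mh Ml by auto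
    then show "\<bar>lamQ s t - hQ s t\<bar> \<le> Ml + Mh" by linarith
  qed
  have P2: "(LINT s:{0..1}|lborel. sig p s t * (lamQ s t - hQ s t))
              = A_fn mu Qp Qpp sigQ sig sigp p t" if p: "p \<in> {0..S}" and t: "t \<in> {0..T}" for p t
  proof -
    have il: "set_integrable lborel {0..1} (\<lambda>s. bQ p s t * lamQ s t)"
      by (rule int_aux[where M=Ml]) (use b_meas b_norm lam_meas Ml p t in auto)
    have ih: "set_integrable lborel {0..1} (\<lambda>s. bQ p s t * hQ s t)"
      by (rule int_aux[where M=Mh]) (use b_meas b_norm h_meas Mh p t in auto)
    define IL where "IL = (LINT s:{0..1}|lborel. bQ p s t * lamQ s t)"
    define IH where "IH = (LINT s:{0..1}|lborel. bQ p s t * hQ s t)"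
    have lhs: "(LINT s:{0..1}|lborel. sig p s t * (lamQ s t - hQ s t)) = sigQ p t * (IL - IH)"
    proof -
      have "(LINT s:{0..1}|lborel. sig p s t * (lamQ s t - hQ s t))
          = (LINT s:{0..1}|lborel. sigQ p t * (bQ p s t * lamQ s t - bQ p s t * hQ s t))"
        by (simp add: sig_eq algebra_simps)
      also have "\<dots> = sigQ p t * (IL - IH)"
        using set_integral_diff(2)[OF il ih] by (simp add: IL_def IH_def)
      finally show ?thesis .
    qed
    have mu: "mu p t = sigQ p t * IL"
      using mu_eq p t by (simp add: sig_eq IL_def mult.assoc)
    have C: "C_fn Qp sig sigp p t = - sigQ p t * IH"
    proof (cases "Qp p t = 0")
      case True
      then have "\<forall>s\<in>{0..1}. hQ s t = 0" using lin1 p t by force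
      then have "IH = 0" unfolding IH_def
        by (subst set_lebesgue_integral_cong[where g="\<lambda>s. 0"]) auto
      then show ?thesis using True by (simp add: C_fn_def)
    next
      case False
      have "\<forall>s\<in>{0..1}. sigp p s t = hQ s t * Qp p t"
      proof
        fix s assume s: "s \<in> {0..(1::real)}"
        have "sigp p s t / Qp p t = hQ s t" using lin1 p t s by blast
        then show "sigp p s t = hQ s t * Qp p t" using False by (simp add: field_simps)
      qed
      then have "(LINT s:{0..1}|lborel. sigp p s t * sig p s t)
          = (LINT s:{0..1}|lborel. (Qp p t * sigQ p t) * (bQ p s t * hQ s t))"
        by (intro set_lebesgue_integral_cong) (auto simp: sig_eq)
      also have "\<dots> = Qp p t * sigQ p t * IH" by (simp add: IH_def)
      finally show ?thesis using False by (simp add: C_fn_def)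
    qed
    show ?thesis using lhs mu C lin2 p t by (simp add: A_fn_def algebra_simps)
  qed
  show ?thesis using P1 P2 by blast
qed

end
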